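(* Fix $p$ with $0<p<1$ and for each positive integer $d$ define $\theta(d)=\dfrac{p}{d-(d-1)p}$. For $\mathbf{U}\in\mathbb{R}^{m\times d}$, $\mathbf{V}\in\mathbb{R}^{n\times d}$ with columns $\mathbf{u}_k,\mathbf{v}_k$, let $\Omega_{\mathrm{dropout}}(\mathbf{U},\mathbf{V})=\sum_{k=1}^d\|\mathbf{u}_k\|_2^2\|\mathbf{v}_k\|_2^2$. Define, for $\mathbf{X}\in\mathbb{R}^{m\times n}$, $$\Lambda(\mathbf{X})=\inf_{d,\mathbf{U},\mathbf{V}}\ \frac{1-\theta(d)}{\theta(d)}\,\Omega_{\mathrm{dropout}}(\mathbf{U},\mathbf{V})\quad\text{subject to } d\ge\operatorname{rank}(\mathbf{X}),\ \mathbf{U}\in\mathbb{R}^{m\times d},\ \mathbf{V}\in\mathbb{R}^{n\times d},\ \mathbf{U}\mathbf{V}^\top=\mathbf{X}.$$ Then the lower convex envelope of $\Lambda$ is $\mathbf{X}\mapsto\frac{1-p}{p}\|\mathbf{X}\|_\star^2$.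
   Context: $\|\mathbf{X}\|_\star$ is the nuclear norm (sum of singular values). The lower convex envelope of a function $f$ is the pointwise supremum of all convex functions $g$ with $g\le f$. $\|\cdot\|_2$ is the Euclidean norm. *)

theory Defs
  imports "HOL-Analysis.Analysis" "HOL-Computational_Algebra.Polynomial"
begin

definition theta :: "real \<Rightarrow> nat \<Rightarrow> real" where
  "theta p d = p / (real d - (real d - 1) * p)"

(* U V^T, where U has columns u 0 .. u (d-1) and V has columns v 0 .. v (d-1) *)
definition factor_prod :: "nat \<Rightarrow> (nat \<Rightarrow> real^'m) \<Rightarrow> (nat \<Rightarrow> real^'n) \<Rightarrow> real^'n^'m" where
  "factor_prod d u v = (\<Sum>k<d. (\<chi> i j. u k $ i * v k $ j))"

definition omega_dropout :: "nat \<Rightarrow> (nat \<Rightarrow> real^'m) \<Rightarrow> (nat \<Rightarrow> real^'n) \<Rightarrow> real" where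
  "omega_dropout d u v = (\<Sum>k<d. (norm (u k))\<^sup>2 * (norm (v k))\<^sup>2)"

definition Lambda :: "real \<Rightarrow> real^'n^'m \<Rightarrow> real" where
  "Lambda p X = Inf { (1 - theta p d) / theta p d * omega_dropout d u v
      | d u v. d \<ge> 1 \<and> d \<ge> rank X \<and> factor_prod d u v = X }"

definition char_poly :: "real^'n^'n \<Rightarrow> real poly" where
  "char_poly A = det (\<chi> i j. (if i = j then [:0, 1:] else 0) - [:A $ i $ j:])"

(* nuclear norm: sum of singular values, i.e. sum of sqrt of the eigenvalues of X^T X
   counted with algebraic multiplicity *)
definition nuclear_norm :: "real^'n^'m \<Rightarrow> real" where
  "nuclear_norm X = (let q = char_poly (transpose X ** X) in
     (\<Sum>e\<in>{x. poly q x = 0}. real (order e q) * sqrt e))"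

definition lower_convex_envelope :: "('a::real_vector \<Rightarrow> real) \<Rightarrow> 'a \<Rightarrow> real" where
  "lower_convex_envelope f x = (SUP g \<in> {g. convex_on UNIV g \<and> (\<forall>y. g y \<le> f y)}. g x)"

end

theory Submission
  imports Defs
begin

lemma sym_inner:
  fixes A :: "real^'n^'n"
  assumes "transpose A = A"
  shows "inner (A *v x) y = inner x (A *v y)"
  by (metis assms dot_lmul_matrix transpose_matrix_vector)

lemma spectral_step:
  fixes A :: "real^'n^'n"
  assumes symA: "transpose A = A" and fS: "finite S" and cS: "card S < CARD('n)"
    and eig: "\<forall>s\<in>S. \<exists>c. A *v s = c *\<^sub>R s"
  shows "\<exists>x. norm x = 1 \<and> (\<forall>s\<in>S. inner s x = 0) \<and> (\<exists>c. A *v x = c *\<^sub>R x)"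
proof -
  have "dim S \<le> card S" using fS by (intro dim_le_card) (auto intro: span_base)
  hence "dim S < DIM(real^'n)" using cS by simp
  then obtain y :: "real^'n" where y0: "y \<noteq> 0" and yo: "\<And>z. z \<in> span S \<Longrightarrow> orthogonal y z"
    using orthogonal_to_subspace_exists[of S] by blast
  define T where "T = (\<Inter>s\<in>S. {x::real^'n. inner s x = 0})"
  define K where "K = sphere (0::real^'n) 1 \<inter> T"
  have memK: "x \<in> K \<longleftrightarrow> norm x = 1 \<and> (\<forall>s\<in>S. inner s x = 0)" for x
    by (auto simp: K_def T_def)
  have "y /\<^sub>R norm y \<in> K" using y0 yo
    by (auto simp: memK orthogonal_def inner_commute intro: span_base)
  hence Kne: "K \<noteq> {}" by auto
  have "closed T" unfolding T_def by (intro closed_INT ballI closed_hyperplane)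
  hence cK: "compact K" unfolding K_def by (intro compact_Int_closed compact_sphere)
  have contq: "continuous_on K (\<lambda>x. inner x (A *v x))"
    by (intro continuous_intros linear_continuous_on matrix_vector_mul_linear bounded_linear_intros)
  obtain x where xK: "x \<in> K" and xmax: "\<And>z. z \<in> K \<Longrightarrow> inner z (A *v z) \<le> inner x (A *v x)"
    using continuous_attains_sup[OF cK Kne contq] by blast
  define M where "M = inner x (A *v x)"
  define r where "r = A *v x - M *\<^sub>R x"
  have nx: "norm x = 1" and xS: "\<forall>s\<in>S. inner s x = 0" using xK memK by auto
  have xx: "inner x x = 1" by (metis nx power2_norm_eq_inner power_one)
  have rS: "inner s r = 0" if sS: "s \<in> S" for s
  proof -
    obtain c where "A *v s = c *\<^sub>R s" using bspec[OF eig sS] by (elim exE)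
    hence "inner s (A *v x) = c * inner s x" using sym_inner[OF symA, of s x] by simp
    thus ?thesis using xS sS by (simp add: r_def inner_diff_right)
  qed
  have xr: "inner x r = 0" by (simp add: r_def inner_diff_right M_def xx)
  have rAx: "inner r (A *v x) = inner r r"
  proof -
    have "A *v x = r + M *\<^sub>R x" by (simp add: r_def)
    thus ?thesis using xr by (simp add: inner_add_right inner_commute)
  qed
  have "inner r r = 0"
  proof (rule ccontr)
    assume "inner r r \<noteq> 0"
    hence R0: "inner r r > 0" by (simp add: order_less_le)
    define R where "R = inner r r"
    define c where "c = M * R - inner r (A *v r)"
    have key: "2 * t * R \<le> t^2 * c" if t0: "t > 0" for t
    proof -
      define z where "z = x + t *\<^sub>R r"
      have zz: "inner z z = 1 + t^2 * R"
        using xr by (simp add: z_def inner_add_left inner_add_right xx inner_commute[of r x] R_def power2_eq_square)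
      have "inner z z > 0" unfolding zz using R0 R_def by (simp add: add_pos_nonneg)
      hence nz: "norm z > 0" by (metis inner_zero_left less_irrefl zero_less_norm_iff)
      have "z /\<^sub>R norm z \<in> K"
        using nz xS rS by (auto simp: memK z_def inner_add_right)
      hence "inner (z /\<^sub>R norm z) (A *v (z /\<^sub>R norm z)) \<le> M" using xmax M_def by blast
      hence "inner z (A *v z) / (norm z)^2 \<le> M"
        by (simp add: matrix_vector_mult_scaleR power2_eq_square divide_inverse mult.commute mult.left_commute)
      hence "inner z (A *v z) \<le> M * (norm z)^2" using nz by (simp add: divide_le_eq)
      moreover have "(norm z)^2 = 1 + t^2 * R" using zz by (simp add: power2_norm_eq_inner)
      moreover have "inner z (A *v z) = M + 2 * t * R + t^2 * inner r (A *v r)"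
      proof -
        have "inner x (A *v r) = inner r (A *v x)"
          using sym_inner[OF symA, of x r] by (simp add: inner_commute)
        thus ?thesis
          by (simp add: z_def matrix_vector_right_distrib matrix_vector_mult_scaleR inner_add_left
              inner_add_right M_def rAx R_def power2_eq_square algebra_simps)
      qed
      ultimately show ?thesis by (simp add: c_def algebra_simps power2_eq_square)
    qed
    define t where "t = R / (\<bar>c\<bar> + 1)"
    have t0: "t > 0" using R0 by (simp add: t_def R_def)
    have "2 * t * R \<le> t^2 * c" using key[OF t0] .
    hence "2 * R \<le> t * c" using t0 by (simp add: power2_eq_square)
    moreover have "t * c \<le> t * \<bar>c\<bar>" using t0 by (simp add: mult_left_mono)
    moreover have "t * \<bar>c\<bar> < R"
    proof -
      have "t * \<bar>c\<bar> = R * (\<bar>c\<bar> / (\<bar>c\<bar> + 1))" by (simp add: t_def)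
      also have "\<dots> < R * 1" using R0 by (intro mult_strict_left_mono) (auto simp: R_def)
      finally show ?thesis by simp
    qed
    ultimately show False using R0 by (simp add: R_def)
  qed
  hence "r = 0" by simp
  hence "A *v x = M *\<^sub>R x" by (simp add: r_def)
  thus ?thesis using nx xS by blast
qed

lemma spectral:
  fixes A :: "real^'n^'n"
  assumes symA: "transpose A = A"
  obtains b :: "'n \<Rightarrow> real^'n" and l :: "'n \<Rightarrow> real"
  where "\<And>i j. inner (b i) (b j) = (if i = j then 1 else 0)" "\<And>j. A *v b j = l j *\<^sub>R b j"
proof -
  have "\<forall>k\<le>CARD('n). \<exists>S. finite S \<and> card S = k \<and> (\<forall>s\<in>S. norm s = 1 \<and> (\<exists>c. A *v s = c *\<^sub>R s))
          \<and> (\<forall>s\<in>S. \<forall>t\<in>S. s \<noteq> t \<longrightarrow> inner s t = 0)" (is "\<forall>k\<le>_. ?P k")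
  proof (intro allI impI)
    fix k assume "k \<le> CARD('n)"
    thus "?P k"
    proof (induction k)
      case 0 show ?case by (intro exI[of _ "{}"]) auto
    next
      case (Suc k)
      then obtain S where fS: "finite S" and cS: "card S = k"
        and nS: "\<forall>s\<in>S. norm s = 1 \<and> (\<exists>c. A *v s = c *\<^sub>R s)"
        and oS: "\<forall>s\<in>S. \<forall>t\<in>S. s \<noteq> t \<longrightarrow> inner s t = 0" by auto
      have "card S < CARD('n)" using cS Suc.prems by simp
      then obtain x where nx: "norm x = 1" and xS: "\<forall>s\<in>S. inner s x = 0" and ex: "\<exists>c. A *v x = c *\<^sub>R x"
        using spectral_step[OF symA fS] nS by blast
      have "x \<notin> S"
      proof
        assume "x \<in> S" hence "inner x x = 0" using xS by blast
        thus False using nx by simp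
      qed
      show ?case
        apply (intro exI[of _ "insert x S"])
        using fS cS \<open>x \<notin> S\<close> nS oS nx xS ex by (auto simp: inner_commute)
    qed
  qed
  then obtain S where fS: "finite S" and cS: "card S = CARD('n)"
    and nS: "\<forall>s\<in>S. norm s = 1 \<and> (\<exists>c. A *v s = c *\<^sub>R s)"
    and oS: "\<forall>s\<in>S. \<forall>t\<in>S. s \<noteq> t \<longrightarrow> inner s t = 0" by blast
  obtain h where h: "bij_betw h (UNIV::'n set) S"
    using finite_same_card_bij[of "UNIV::'n set" S] fS cS by auto
  have hS: "h i \<in> S" for i using h by (auto simp: bij_betw_def)
  have hinj: "h i = h j \<Longrightarrow> i = j" for i j using h by (auto simp: bij_betw_def inj_def)
  define l where "l j = (SOME c. A *v h j = c *\<^sub>R h j)" for j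
  show ?thesis
  proof (rule that)
    fix i j show "inner (h i) (h j) = (if i = j then 1 else 0)"
    proof (cases "i = j")
      case True
      then show ?thesis using nS hS by (simp add: power2_norm_eq_inner[symmetric])
    next
      case False
      then show ?thesis using oS hS[of i] hS[of j] hinj[of i j] by auto
    qed
  next
    fix j show "A *v h j = l j *\<^sub>R h j"
      unfolding l_def using nS hS by (metis (mono_tags, lifting) someI_ex)
  qed
qed


lemma mat_mult_vec: "mat x *v (v::real^'n) = x *\<^sub>R v"
  by (simp add: vec_eq_iff matrix_vector_mult_def mat_def if_distrib if_distribR cong: if_cong)

lemma charpoly_eval:
  fixes A :: "real^'n^'n"
  shows "poly (char_poly A) x = det (mat x - A)"
  unfolding char_poly_def det_def
  by (simp add: poly_sum poly_prod mat_def if_distrib[of "\<lambda>q. poly q x"] poly_pCons cong: if_cong)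

lemma conj_entry:
  fixes b :: "'n \<Rightarrow> real^'n" and M :: "real^'n^'n"
  defines "P \<equiv> (\<chi> i j. b j $ i)"
  shows "(transpose P ** M ** P) $ i $ j = inner (b i) (M *v b j)"
proof -
  have 1: "(transpose P ** M ** P) $ i $ j = (\<Sum>l\<in>UNIV. \<Sum>k\<in>UNIV. b i $ k * M$k$l * b j $ l)"
    unfolding P_def by (simp add: matrix_matrix_mult_def transpose_def sum_distrib_right)
  have 2: "inner (b i) (M *v b j) = (\<Sum>k\<in>UNIV. \<Sum>l\<in>UNIV. b i $ k * M$k$l * b j $ l)"
    by (simp add: inner_vec_def matrix_vector_mult_def sum_distrib_left mult.assoc)
  show ?thesis unfolding 1 2 by (rule sum.swap)
qed

lemma orth_PtP:
  fixes b :: "'n \<Rightarrow> real^'n"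
  assumes "\<And>i j. inner (b i) (b j) = (if i = j then 1 else 0)"
  defines "P \<equiv> (\<chi> i j. b j $ i)"
  shows "transpose P ** P = mat 1" and "P ** transpose P = mat 1"
proof -
  show 1: "transpose P ** P = mat 1"
    using assms(1) unfolding P_def
    by (simp add: matrix_matrix_mult_def transpose_def inner_vec_def mat_def vec_eq_iff)
  thus "P ** transpose P = mat 1" using matrix_left_right_inverse by blast
qed

lemma charpoly_spectral:
  fixes A :: "real^'n^'n" and b :: "'n \<Rightarrow> real^'n"
  assumes ob: "\<And>i j. inner (b i) (b j) = (if i = j then 1 else 0)"
    and ev: "\<And>j. A *v b j = l j *\<^sub>R b j"
  shows "char_poly A = (\<Prod>j\<in>UNIV. [:- l j, 1:])"
proof -
  define P where "P = (\<chi> i j. b j $ i)"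
  have PtP: "transpose P ** P = mat 1" and PPt: "P ** transpose P = mat 1"
    using orth_PtP[OF ob] by (auto simp: P_def)
  have dPP: "det (transpose P) * det P = 1"
    using PtP det_mul[of "transpose P" P] by simp
  have "poly (char_poly A) x = poly (\<Prod>j\<in>UNIV. [:- l j, 1:]) x" for x
  proof -
    have "transpose P ** (mat x - A) ** P = (\<chi> i j. if i = j then x - l j else 0)"
    proof -
      have "(transpose P ** (mat x - A) ** P) $ i $ j = (if i = j then x - l j else 0)" for i j
        unfolding P_def conj_entry
        using ob[of i j]
        by (simp add: matrix_vector_mult_diff_rdistrib ev inner_diff_right mat_mult_vec)
      thus ?thesis by (simp add: vec_eq_iff)
    qed
    hence "det (transpose P ** (mat x - A) ** P) = (\<Prod>j\<in>UNIV. x - l j)"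
      by (simp add: det_diagonal)
    hence "det (transpose P) * det (mat x - A) * det P = (\<Prod>j\<in>UNIV. x - l j)"
      by (simp add: det_mul)
    hence "det (mat x - A) = (\<Prod>j\<in>UNIV. x - l j)" using dPP
      by (metis mult.commute mult.left_commute mult_1_right)
    thus ?thesis by (simp add: charpoly_eval poly_prod)
  qed
  thus ?thesis using poly_eq_poly_eq_iff by blast
qed


lemma order_prod_linear:
  fixes l :: "'a \<Rightarrow> real"
  assumes "finite F"
  shows "order e (\<Prod>j\<in>F. [:- l j, 1:]) = card {j\<in>F. l j = e}"
  using assms
proof (induction F rule: finite_induct)
  case empty
  then show ?case by (simp add: order_0I)
next
  case (insert a F)
  have nz: "[:- l a, 1:] * (\<Prod>j\<in>F. [:- l j, 1:]) \<noteq> 0"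
  proof -
    have f0: "[:- l a, 1:] \<noteq> (0::real poly)" by simp
    have p0: "(\<Prod>j\<in>F. [:- l j, 1:]) \<noteq> (0::real poly)" using insert.hyps(1) by (simp add: prod_zero_iff)
    show ?thesis using f0 p0 by (metis mult_eq_0_iff)
  qed
  have oa: "order e [:- l a, 1:] = (if l a = e then 1 else 0)"
  proof (cases "l a = e")
    case True
    then show ?thesis using order_power_n_n[of e 1] by simp
  next
    case False
    hence "poly [:- l a, 1:] e \<noteq> 0" by simp
    hence "order e [:- l a, 1:] = 0" by (rule order_0I)
    then show ?thesis using False by simp
  qed
  have "{j \<in> insert a F. l j = e} = (if l a = e then insert a {j\<in>F. l j = e} else {j\<in>F. l j = e})"
    by auto
  moreover have "a \<notin> {j\<in>F. l j = e}" using insert.hyps by auto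
  ultimately have "card {j \<in> insert a F. l j = e} = (if l a = e then 1 else 0) + card {j\<in>F. l j = e}"
    using insert.hyps by auto
  then show ?case
    using insert.hyps insert.IH order_mult[OF nz] oa by simp
qed

lemma nuclear_spectral:
  fixes X :: "real^'n^'m" and b :: "'n \<Rightarrow> real^'n"
  assumes ob: "\<And>i j. inner (b i) (b j) = (if i = j then 1 else 0)"
    and ev: "\<And>j. (transpose X ** X) *v b j = l j *\<^sub>R b j"
  shows "nuclear_norm X = (\<Sum>j\<in>UNIV. sqrt (l j))"
proof -
  define q where "q = (\<Prod>j\<in>UNIV. [:- l j, 1:])"
  have cq: "char_poly (transpose X ** X) = q" unfolding q_def by (rule charpoly_spectral[OF ob ev])
  have roots: "{x. poly q x = 0} = range l"
    by (auto simp: q_def poly_prod prod_zero_iff)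
  have ord: "order e q = card {j. l j = e}" for e
    unfolding q_def by (simp add: order_prod_linear)
  have "nuclear_norm X = (\<Sum>e\<in>range l. real (card {j. l j = e}) * sqrt e)"
    unfolding nuclear_norm_def Let_def cq roots ord ..
  also have "\<dots> = (\<Sum>e\<in>range l. \<Sum>j\<in>{j. l j = e}. sqrt (l j))"
    by (intro sum.cong refl) simp
  also have "\<dots> = (\<Sum>j\<in>UNIV. sqrt (l j))"
    using sum.image_gen[of "UNIV::'n set" "\<lambda>j. sqrt (l j)" l] by simp
  finally show ?thesis .
qed


definition outer :: "real^'m \<Rightarrow> real^'n \<Rightarrow> real^'n^'m" where
  "outer u v = (\<chi> i j. u $ i * v $ j)"

lemma inner_mult_transpose:
  fixes X :: "real^'n^'m"
  shows "inner (X *v x) (X *v y) = inner x ((transpose X ** X) *v y)"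
  by (metis dot_lmul_matrix inner_commute matrix_vector_mul_assoc transpose_matrix_vector)

lemma svd:
  fixes X :: "real^'n^'m"
  obtains b :: "'n \<Rightarrow> real^'n" and w :: "'n \<Rightarrow> real^'m"
  where "\<And>i j. inner (b i) (b j) = (if i = j then 1 else 0)"
    "\<And>i j. i \<noteq> j \<Longrightarrow> inner (w i) (w j) = 0"
    "X = (\<Sum>j\<in>UNIV. outer (w j) (b j))"
    "nuclear_norm X = (\<Sum>j\<in>UNIV. norm (w j))"
proof -
  define A where "A = transpose X ** X"
  have symA: "transpose A = A" by (simp add: A_def matrix_transpose_mul)
  obtain b :: "'n \<Rightarrow> real^'n" and l :: "'n \<Rightarrow> real" where ob: "\<And>i j. inner (b i) (b j) = (if i = j then 1 else 0)"
    and ev: "\<And>j. A *v b j = l j *\<^sub>R b j"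
    using spectral[OF symA] by blast
  define w where "w j = X *v b j" for j
  have ww: "inner (w i) (w j) = l j * (if i = j then 1 else 0)" for i j
    using inner_mult_transpose[of X "b i" "b j"] ev[of j] ob[of i j] by (simp add: w_def A_def)
  have lj: "l j = (norm (w j))^2" for j
    using ww[of j j] by (simp add: power2_norm_eq_inner)
  have nn: "nuclear_norm X = (\<Sum>j\<in>UNIV. norm (w j))"
  proof -
    have "nuclear_norm X = (\<Sum>j\<in>UNIV. sqrt (l j))"
      by (rule nuclear_spectral) (use ob ev in \<open>auto simp: A_def\<close>)
    thus ?thesis by (simp add: lj)
  qed
  define P where "P = (\<chi> i j. b j $ i)"
  have PPt: "P ** transpose P = mat 1" using orth_PtP[OF ob] by (simp add: P_def)
  have delta: "(\<Sum>j\<in>UNIV. b j $ k * b j $ c) = (if k = c then 1 else 0)" for k c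
  proof -
    have "(P ** transpose P) $ k $ c = (\<Sum>j\<in>UNIV. b j $ k * b j $ c)"
      by (simp add: P_def matrix_matrix_mult_def transpose_def)
    thus ?thesis using PPt by (simp add: mat_def)
  qed
  have dec: "X = (\<Sum>j\<in>UNIV. outer (w j) (b j))"
  proof -
    have "(\<Sum>j\<in>UNIV. outer (w j) (b j)) $ r $ c = X $ r $ c" for r c
    proof -
      have "(\<Sum>j\<in>UNIV. outer (w j) (b j)) $ r $ c = (\<Sum>j\<in>UNIV. \<Sum>k\<in>UNIV. X$r$k * (b j $ k * b j $ c))"
        by (simp add: outer_def w_def matrix_vector_mult_def sum_component sum_distrib_right mult.assoc)
      also have "\<dots> = (\<Sum>k\<in>UNIV. X$r$k * (\<Sum>j\<in>UNIV. b j $ k * b j $ c))"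
        by (subst sum.swap) (simp add: sum_distrib_left)
      also have "\<dots> = X $ r $ c" by (simp add: delta if_distrib cong: if_cong)
      finally show ?thesis .
    qed
    thus ?thesis by (simp add: vec_eq_iff)
  qed
  show ?thesis
    by (rule that[OF ob _ dec nn]) (simp add: ww)
qed



definition frob :: "real^'n^'m \<Rightarrow> real^'n^'m \<Rightarrow> real" where
  "frob W Y = (\<Sum>i\<in>UNIV. \<Sum>k\<in>UNIV. W$i$k * Y$i$k)"

lemma frob_add: "frob W (Y + Z) = frob W Y + frob W Z"
  unfolding frob_def by (simp add: algebra_simps sum.distrib)

lemma frob_zero: "frob W 0 = 0"
  unfolding frob_def by simp

lemma frob_sum: "finite F \<Longrightarrow> frob W (\<Sum>j\<in>F. Y j) = (\<Sum>j\<in>F. frob W (Y j))"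
  by (induction F rule: finite_induct) (simp_all add: frob_add frob_zero)

lemma frob_scale: "frob W (c *\<^sub>R Y) = c * frob W Y"
  unfolding frob_def by (simp add: sum_distrib_left algebra_simps)

lemma frob_outer: "frob W (outer u v) = inner u (W *v v)"
  unfolding frob_def outer_def
  by (simp add: inner_vec_def matrix_vector_mult_def sum_distrib_left mult.assoc mult.left_commute)

lemma frob_comm: "frob W Y = frob Y W"
  unfolding frob_def by (simp add: mult.commute)

lemma outer_mult_vec: "outer a b *v v = inner b v *\<^sub>R a"
  by (simp add: vec_eq_iff outer_def matrix_vector_mult_def inner_vec_def sum_distrib_left mult.commute
      mult.left_commute)

lemma delta_basis:
  fixes b :: "'n \<Rightarrow> real^'n"
  assumes ob: "\<And>i j. inner (b i) (b j) = (if i = j then 1 else 0)"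
  shows "(\<Sum>j\<in>UNIV. b j $ k * b j $ c) = (if k = c then 1 else 0)"
proof -
  define P where "P = (\<chi> i j. b j $ i)"
  have PPt: "P ** transpose P = mat 1" using orth_PtP[OF ob] by (simp add: P_def)
  have "(P ** transpose P) $ k $ c = (\<Sum>j\<in>UNIV. b j $ k * b j $ c)"
    by (simp add: P_def matrix_matrix_mult_def transpose_def)
  thus ?thesis using PPt by (simp add: mat_def)
qed

lemma parseval:
  fixes b :: "'n \<Rightarrow> real^'n"
  assumes ob: "\<And>i j. inner (b i) (b j) = (if i = j then 1 else 0)"
  shows "(norm v)^2 = (\<Sum>j\<in>UNIV. (inner (b j) v)^2)"
proof -
  have v: "v = (\<Sum>j\<in>UNIV. inner (b j) v *\<^sub>R b j)"
  proof -
    have "(\<Sum>j\<in>UNIV. inner (b j) v *\<^sub>R b j) $ c = v $ c" for c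
    proof -
      have "(\<Sum>j\<in>UNIV. inner (b j) v *\<^sub>R b j) $ c = (\<Sum>j\<in>UNIV. \<Sum>k\<in>UNIV. v $ k * (b j $ k * b j $ c))"
        by (simp add: sum_component inner_vec_def sum_distrib_left sum_distrib_right ac_simps)
      also have "\<dots> = (\<Sum>k\<in>UNIV. v $ k * (\<Sum>j\<in>UNIV. b j $ k * b j $ c))"
        by (subst sum.swap) (simp add: sum_distrib_left)
      also have "\<dots> = v $ c" by (simp add: delta_basis[OF ob] if_distrib cong: if_cong)
      finally show ?thesis .
    qed
    thus ?thesis by (simp add: vec_eq_iff)
  qed
  have "(norm v)^2 = (\<Sum>j\<in>UNIV. (norm (inner (b j) v *\<^sub>R b j))^2)"
    apply (subst v)
    apply (rule norm_sum_Pythagorean)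
    using ob by (auto simp: pairwise_def orthogonal_def)
  also have "\<dots> = (\<Sum>j\<in>UNIV. (inner (b j) v)^2)"
  proof -
    have nb: "norm (b j) = 1" for j using ob[of j j] by (simp add: norm_eq_sqrt_inner)
    show ?thesis by (simp add: nb)
  qed
  finally show ?thesis .
qed


lemma msum_mult_vec:
  fixes M :: "'a \<Rightarrow> real^'n^'m"
  assumes "finite F"
  shows "(\<Sum>j\<in>F. M j) *v v = (\<Sum>j\<in>F. M j *v v)"
  using assms by (induction F rule: finite_induct) (simp_all add: matrix_vector_mult_add_rdistrib)

lemma opnorm_W:
  fixes b :: "'n \<Rightarrow> real^'n" and e :: "'n \<Rightarrow> real^'m"
  assumes ob: "\<And>i j. inner (b i) (b j) = (if i = j then 1 else 0)"
    and eo: "\<And>i j. i \<noteq> j \<Longrightarrow> inner (e i) (e j) = 0"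
    and en: "\<And>j. norm (e j) \<le> 1"
  shows "norm ((\<Sum>j\<in>UNIV. outer (e j) (b j)) *v v) \<le> norm v"
proof -
  have "(\<Sum>j\<in>UNIV. outer (e j) (b j)) *v v = (\<Sum>j\<in>UNIV. inner (b j) v *\<^sub>R e j)"
    by (simp add: msum_mult_vec outer_mult_vec)
  hence "(norm ((\<Sum>j\<in>UNIV. outer (e j) (b j)) *v v))^2 = (\<Sum>j\<in>UNIV. (norm (inner (b j) v *\<^sub>R e j))^2)"
    using eo by (simp add: norm_sum_Pythagorean pairwise_def orthogonal_def)
  also have "\<dots> = (\<Sum>j\<in>UNIV. (inner (b j) v)^2 * (norm (e j))^2)"
    by (simp add: power_mult_distrib)
  also have "\<dots> \<le> (\<Sum>j\<in>UNIV. (inner (b j) v)^2)"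
  proof (rule sum_mono)
    fix j
    have "(norm (e j))^2 \<le> 1" using en[of j] by (simp add: power_le_one)
    thus "(inner (b j) v)^2 * (norm (e j))^2 \<le> (inner (b j) v)^2"
      by (simp add: mult_left_le)
  qed
  also have "\<dots> = (norm v)^2" using parseval[OF ob] by simp
  finally show ?thesis by (simp add: power2_le_iff_abs_le)
qed

lemma frob_outer_le:
  assumes W: "\<And>v. norm (W *v v) \<le> norm v"
  shows "frob W (outer u v) \<le> norm u * norm v"
proof -
  have "frob W (outer u v) \<le> norm u * norm (W *v v)"
    unfolding frob_outer by (rule norm_cauchy_schwarz)
  also have "\<dots> \<le> norm u * norm v" by (intro mult_left_mono W) simp
  finally show ?thesis .
qed

lemma nuclear_nonneg: "nuclear_norm (X::real^'n^'m) \<ge> 0"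
proof -
  obtain b :: "'n \<Rightarrow> real^'n" and w :: "'n \<Rightarrow> real^'m" where "nuclear_norm X = (\<Sum>j\<in>UNIV. norm (w j))"
    using svd[of X] by blast
  thus ?thesis by (simp add: sum_nonneg)
qed

lemma frob_le_nuclear:
  fixes X :: "real^'n^'m"
  assumes W: "\<And>v. norm (W *v v) \<le> norm v"
  shows "frob W X \<le> nuclear_norm X"
proof -
  obtain b :: "'n \<Rightarrow> real^'n" and w :: "'n \<Rightarrow> real^'m" where ob: "\<And>i j. inner (b i) (b j) = (if i = j then 1 else 0)"
    and dec: "X = (\<Sum>j\<in>UNIV. outer (w j) (b j))" and nn: "nuclear_norm X = (\<Sum>j\<in>UNIV. norm (w j))"
    using svd[of X] by blast
  have nb: "norm (b j) = 1" for j using ob[of j j] by (simp add: norm_eq_sqrt_inner)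
  have "frob W X = (\<Sum>j\<in>UNIV. frob W (outer (w j) (b j)))"
    by (subst dec) (simp add: frob_sum)
  also have "\<dots> \<le> (\<Sum>j\<in>UNIV. norm (w j) * norm (b j))"
    by (intro sum_mono frob_outer_le W)
  also have "\<dots> = nuclear_norm X" by (simp add: nb nn)
  finally show ?thesis .
qed

lemma nuclear_attained:
  fixes X :: "real^'n^'m"
  obtains W where "\<And>v. norm (W *v v) \<le> norm v" "frob W X = nuclear_norm X"
proof -
  obtain b :: "'n \<Rightarrow> real^'n" and w :: "'n \<Rightarrow> real^'m" where ob: "\<And>i j. inner (b i) (b j) = (if i = j then 1 else 0)"
    and wo: "\<And>i j. i \<noteq> j \<Longrightarrow> inner (w i) (w j) = 0"
    and dec: "X = (\<Sum>j\<in>UNIV. outer (w j) (b j))" and nn: "nuclear_norm X = (\<Sum>j\<in>UNIV. norm (w j))"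
    using svd[of X] by blast
  define e where "e j = w j /\<^sub>R norm (w j)" for j
  define W where "W = (\<Sum>j\<in>UNIV. outer (e j) (b j))"
  have eo: "inner (e i) (e j) = 0" if "i \<noteq> j" for i j using wo[OF that] by (simp add: e_def)
  have en: "norm (e j) \<le> 1" for j by (cases "w j = 0") (simp_all add: e_def)
  have Xb: "X *v b j = w j" for j
  proof -
    have "X *v b j = (\<Sum>i\<in>UNIV. inner (b i) (b j) *\<^sub>R w i)"
      by (subst dec) (simp add: msum_mult_vec outer_mult_vec)
    also have "\<dots> = (\<Sum>i\<in>UNIV. if i = j then w i else 0)" by (intro sum.cong refl) (simp add: ob)
    also have "\<dots> = w j" by simp
    finally show ?thesis .
  qed
  have "frob W X = frob X W" by (rule frob_comm)
  also have "\<dots> = (\<Sum>j\<in>UNIV. frob X (outer (e j) (b j)))"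
    unfolding W_def by (rule frob_sum) simp
  also have "\<dots> = (\<Sum>j\<in>UNIV. inner (e j) (w j))"
    by (simp add: frob_outer Xb)
  also have "\<dots> = (\<Sum>j\<in>UNIV. norm (w j))"
  proof (intro sum.cong refl)
    fix j
    show "inner (e j) (w j) = norm (w j)"
    proof (cases "w j = 0")
      case False
      have "inner (e j) (w j) = inner (w j) (w j) / norm (w j)" by (simp add: e_def divide_inverse mult.commute)
      also have "\<dots> = (norm (w j))^2 / norm (w j)" by (simp add: power2_norm_eq_inner)
      also have "\<dots> = norm (w j)" using False by (simp add: power2_eq_square)
      finally show ?thesis .
    qed (simp add: e_def)
  qed
  finally have "frob W X = nuclear_norm X" using nn by simp
  moreover have "norm (W *v v) \<le> norm v" for v unfolding W_def by (rule opnorm_W[OF ob eo en])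
  ultimately show ?thesis using that by blast
qed



lemma nuclear_convex_comb:
  fixes X Y :: "real^'n^'m"
  assumes "u \<ge> 0" "v \<ge> 0"
  shows "nuclear_norm (u *\<^sub>R X + v *\<^sub>R Y) \<le> u * nuclear_norm X + v * nuclear_norm Y"
proof -
  obtain W where W: "\<And>z. norm (W *v z) \<le> norm z" and eq: "frob W (u *\<^sub>R X + v *\<^sub>R Y) = nuclear_norm (u *\<^sub>R X + v *\<^sub>R Y)"
    using nuclear_attained by blast
  have "nuclear_norm (u *\<^sub>R X + v *\<^sub>R Y) = u * frob W X + v * frob W Y"
    using eq by (simp add: frob_add frob_scale)
  also have "\<dots> \<le> u * nuclear_norm X + v * nuclear_norm Y"
    using assms frob_le_nuclear[OF W, of X] frob_le_nuclear[OF W, of Y]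
    by (intro add_mono mult_left_mono) auto
  finally show ?thesis .
qed

lemma sq_nuclear_convex:
  assumes "c \<ge> 0"
  shows "convex_on UNIV (\<lambda>X::real^'n^'m. c * (nuclear_norm X)^2)"
proof (rule convex_onI)
  fix t :: real and X Y :: "real^'n^'m"
  assume t: "0 < t" "t < 1"
  define a where "a = nuclear_norm X"
  define b where "b = nuclear_norm Y"
  have a0: "a \<ge> 0" and b0: "b \<ge> 0" by (simp_all add: a_def b_def nuclear_nonneg)
  have "nuclear_norm ((1 - t) *\<^sub>R X + t *\<^sub>R Y) \<le> (1 - t) * a + t * b"
    using nuclear_convex_comb[of "1 - t" t X Y] t by (simp add: a_def b_def)
  hence "(nuclear_norm ((1 - t) *\<^sub>R X + t *\<^sub>R Y))^2 \<le> ((1 - t) * a + t * b)^2"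
    by (intro power_mono) (simp_all add: nuclear_nonneg)
  also have "\<dots> \<le> (1 - t) * a^2 + t * b^2"
  proof -
    have "(1 - t) * a^2 + t * b^2 - ((1 - t) * a + t * b)^2 = t * (1 - t) * (a - b)^2"
      by (simp add: power2_eq_square algebra_simps)
    moreover have "t * (1 - t) * (a - b)^2 \<ge> 0" using t by simp
    ultimately show ?thesis by linarith
  qed
  finally have "(nuclear_norm ((1 - t) *\<^sub>R X + t *\<^sub>R Y))^2 \<le> (1 - t) * a^2 + t * b^2" .
  hence "c * (nuclear_norm ((1 - t) *\<^sub>R X + t *\<^sub>R Y))^2 \<le> c * ((1 - t) * a^2 + t * b^2)"
    using assms by (simp add: mult_left_mono)
  thus "c * (nuclear_norm ((1 - t) *\<^sub>R X + t *\<^sub>R Y))^2 \<le> (1 - t) * (c * (nuclear_norm X)^2) + t * (c * (nuclear_norm Y)^2)"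
    by (simp add: a_def b_def algebra_simps)
qed simp

lemma theta_ratio:
  assumes "0 < p" "p < 1" "d \<ge> 1"
  shows "(1 - theta p d) / theta p d = real d * (1 - p) / p"
proof -
  have pos: "real d - (real d - 1) * p > 0"
  proof -
    have d1: "real d \<ge> 1" using assms by simp
    have e: "real d - (real d - 1) * p = (real d - 1) * (1 - p) + 1" by (simp add: algebra_simps)
    have "(real d - 1) * (1 - p) \<ge> 0" using assms d1 by simp
    thus ?thesis unfolding e by linarith
  qed
  define q where "q = real d - (real d - 1) * p"
  have q0: "q > 0" using pos by (simp add: q_def)
  have "(1 - theta p d) / theta p d = (1 - p / q) / (p / q)" by (simp add: theta_def q_def)
  also have "\<dots> = (q - p) / p" using q0 assms by (simp add: field_simps)
  finally have "(1 - theta p d) / theta p d = ((real d - (real d - 1) * p) - p) / p" by (simp add: q_def)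
  also have "(real d - (real d - 1) * p) - p = real d * (1 - p)" by (simp add: algebra_simps)
  finally show ?thesis by simp
qed

lemma factor_prod_outer: "factor_prod d u v = (\<Sum>k<d. outer (u k) (v k))"
  by (simp add: factor_prod_def outer_def)

lemma lambda_elem_lower:
  fixes X :: "real^'n^'m"
  assumes p: "0 < p" "p < 1" and d: "d \<ge> 1" and fp: "factor_prod d u v = X"
  shows "(1 - p) / p * (nuclear_norm X)^2 \<le> (1 - theta p d) / theta p d * omega_dropout d u v"
proof -
  obtain W where W: "\<And>z. norm (W *v z) \<le> norm z" and eq: "frob W X = nuclear_norm X"
    using nuclear_attained by blast
  define a where "a k = norm (u k) * norm (v k)" for k
  have "nuclear_norm X = frob W (\<Sum>k<d. outer (u k) (v k))"
    using eq fp by (simp add: factor_prod_outer)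
  also have "\<dots> = (\<Sum>k<d. frob W (outer (u k) (v k)))" by (rule frob_sum) simp
  also have "\<dots> \<le> (\<Sum>k<d. a k)" unfolding a_def by (intro sum_mono frob_outer_le W)
  finally have N: "nuclear_norm X \<le> (\<Sum>k<d. a k)" .
  have "(nuclear_norm X)^2 \<le> (\<Sum>k<d. a k)^2" using N nuclear_nonneg by (intro power_mono) auto
  also have "\<dots> \<le> (\<Sum>k<d. (a k)^2) * real d"
    using sum_squared_le_sum_of_squares[of a "{..<d}"] by simp
  also have "(\<Sum>k<d. (a k)^2) = omega_dropout d u v"
    by (simp add: omega_dropout_def a_def power_mult_distrib)
  finally have "(nuclear_norm X)^2 \<le> real d * omega_dropout d u v" by (simp add: mult.commute)
  hence "(1 - p) / p * (nuclear_norm X)^2 \<le> (1 - p) / p * (real d * omega_dropout d u v)"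
    using p by (intro mult_left_mono) auto
  thus ?thesis using theta_ratio[OF p d] by (simp add: field_simps)
qed



lemma outer_sum_left: "finite F \<Longrightarrow> outer (\<Sum>i\<in>F. f i) y = (\<Sum>i\<in>F. outer (f i) y)"
  by (simp add: outer_def vec_eq_iff sum_component sum_distrib_right)

lemma outer_sum_right: "finite F \<Longrightarrow> outer x (\<Sum>i\<in>F. g i) = (\<Sum>i\<in>F. outer x (g i))"
  by (simp add: outer_def vec_eq_iff sum_component sum_distrib_left)

lemma outer_scale_left: "outer (a *\<^sub>R x) y = a *\<^sub>R outer x y"
  by (simp add: outer_def vec_eq_iff)

lemma outer_scale_right: "outer x (a *\<^sub>R y) = a *\<^sub>R outer x y"
  by (simp add: outer_def vec_eq_iff)

lemma outer_zero_left: "outer 0 y = 0"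
  by (simp add: outer_def vec_eq_iff)

definition eps :: "'n \<Rightarrow> 'n set \<Rightarrow> real" where
  "eps j K = (if j \<in> K then -1 else 1)"

lemma eps_sq: "eps j K * eps j K = 1"
  by (simp add: eps_def)

lemma abs_eps: "\<bar>eps j K\<bar> = 1"
  by (simp add: eps_def)

lemma rademacher:
  fixes i j :: "'n::finite"
  shows "(\<Sum>K\<in>(UNIV::'n set set). eps i K * eps j K) = (if i = j then real CARD('n set) else 0)"
proof (cases "i = j")
  case True
  then show ?thesis by (simp add: eps_sq)
next
  case False
  define f where "f K = (if i \<in> K then K - {i} else insert i K)" for K :: "'n set"
  have ff: "f (f K) = K" for K by (auto simp: f_def)
  have e1: "eps i (f K) = - eps i K" for K by (auto simp: f_def eps_def)
  have e2: "eps j (f K) = eps j K" for K using False by (auto simp: f_def eps_def)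
  have "(\<Sum>K\<in>(UNIV::'n set set). - (eps i K * eps j K)) = (\<Sum>K\<in>(UNIV::'n set set). eps i K * eps j K)"
    by (rule sum.reindex_bij_witness[of _ f f]) (auto simp: ff e1 e2)
  hence "(\<Sum>K\<in>(UNIV::'n set set). eps i K * eps j K) = 0" by (simp add: sum_negf)
  thus ?thesis using False by simp
qed

lemma lambda_attained:
  fixes X :: "real^'n^'m"
  shows "\<exists>d u v. d \<ge> 1 \<and> d \<ge> rank X \<and> factor_prod d u v = X
            \<and> real d * omega_dropout d u v = (nuclear_norm X)^2"
proof -
  obtain b :: "'n \<Rightarrow> real^'n" and w :: "'n \<Rightarrow> real^'m"
    where ob: "\<And>i j. inner (b i) (b j) = (if i = j then 1 else 0)"
    and wo: "\<And>i j. i \<noteq> j \<Longrightarrow> inner (w i) (w j) = 0"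
    and dec: "X = (\<Sum>j\<in>UNIV. outer (w j) (b j))" and nn: "nuclear_norm X = (\<Sum>j\<in>UNIV. norm (w j))"
    using svd[of X] by blast
  define s where "s j = norm (w j)" for j
  define uu where "uu j = w j /\<^sub>R sqrt (s j)" for j
  define vv where "vv j = sqrt (s j) *\<^sub>R b j" for j
  have s0: "s j \<ge> 0" for j by (simp add: s_def)
  have ouv: "outer (uu j) (vv j) = outer (w j) (b j)" for j
  proof (cases "s j = 0")
    case True
    hence "w j = 0" by (simp add: s_def)
    thus ?thesis by (simp add: uu_def vv_def outer_zero_left)
  next
    case False
    hence "sqrt (s j) > 0" using s0[of j] by simp
    thus ?thesis by (simp add: uu_def vv_def outer_scale_left outer_scale_right)
  qed
  have nb: "norm (b j) = 1" for j using ob[of j j] by (simp add: norm_eq_sqrt_inner)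
  have nuu: "(norm (uu j))^2 = s j" for j
  proof (cases "s j = 0")
    case True thus ?thesis by (simp add: uu_def s_def)
  next
    case False
    hence sp: "s j > 0" using s0[of j] by simp
    have "norm (uu j) = s j / sqrt (s j)" by (simp add: uu_def s_def divide_inverse mult.commute)
    also have "\<dots> = sqrt (s j)" using sp by (simp add: real_div_sqrt)
    finally show ?thesis using sp by simp
  qed
  have nvv: "(norm (vv j))^2 = s j" for j using s0[of j] by (simp add: vv_def nb)
  have ouu: "inner (uu i) (uu j) = 0" if "i \<noteq> j" for i j using wo[OF that] by (simp add: uu_def)
  have ovv: "inner (vv i) (vv j) = 0" if "i \<noteq> j" for i j using ob[of i j] that by (simp add: vv_def)
  define D where "D = CARD('n set)"
  have D0: "D > 0" by (simp add: D_def)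
  define U where "U K = (1 / sqrt D) *\<^sub>R (\<Sum>j\<in>UNIV. eps j K *\<^sub>R uu j)" for K
  define V where "V K = (1 / sqrt D) *\<^sub>R (\<Sum>j\<in>UNIV. eps j K *\<^sub>R vv j)" for K
  have sumUV: "(\<Sum>K\<in>UNIV. outer (U K) (V K)) = X"
  proof -
    have "outer (U K) (V K) = (1 / D) *\<^sub>R (\<Sum>i\<in>UNIV. \<Sum>j\<in>UNIV. (eps i K * eps j K) *\<^sub>R outer (uu i) (vv j))" for K
    proof -
      have "outer (U K) (V K) = (1 / sqrt D * (1 / sqrt D)) *\<^sub>R outer (\<Sum>i\<in>UNIV. eps i K *\<^sub>R uu i) (\<Sum>j\<in>UNIV. eps j K *\<^sub>R vv j)"
        by (simp add: U_def V_def outer_scale_left outer_scale_right)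
      also have "outer (\<Sum>i\<in>UNIV. eps i K *\<^sub>R uu i) (\<Sum>j\<in>UNIV. eps j K *\<^sub>R vv j)
          = (\<Sum>i\<in>UNIV. \<Sum>j\<in>UNIV. (eps i K * eps j K) *\<^sub>R outer (uu i) (vv j))"
      proof -
        have "outer (\<Sum>i\<in>UNIV. eps i K *\<^sub>R uu i) (\<Sum>j\<in>UNIV. eps j K *\<^sub>R vv j)
            = (\<Sum>i\<in>UNIV. outer (eps i K *\<^sub>R uu i) (\<Sum>j\<in>UNIV. eps j K *\<^sub>R vv j))"
          by (rule outer_sum_left) simp
        also have "\<dots> = (\<Sum>i\<in>UNIV. \<Sum>j\<in>UNIV. outer (eps i K *\<^sub>R uu i) (eps j K *\<^sub>R vv j))"
          by (simp add: outer_sum_right)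
        also have "\<dots> = (\<Sum>i\<in>UNIV. \<Sum>j\<in>UNIV. (eps i K * eps j K) *\<^sub>R outer (uu i) (vv j))"
          by (simp add: outer_scale_left outer_scale_right mult.commute)
        finally show ?thesis .
      qed
      also have "1 / sqrt D * (1 / sqrt D) = 1 / D" using D0 by (simp add: real_sqrt_mult[symmetric])
      finally show ?thesis .
    qed
    hence "(\<Sum>K\<in>UNIV. outer (U K) (V K)) = (1 / D) *\<^sub>R (\<Sum>K\<in>UNIV. \<Sum>i\<in>UNIV. \<Sum>j\<in>UNIV. (eps i K * eps j K) *\<^sub>R outer (uu i) (vv j))"
      by (simp add: scaleR_sum_right)
    also have "(\<Sum>K\<in>UNIV. \<Sum>i\<in>UNIV. \<Sum>j\<in>UNIV. (eps i K * eps j K) *\<^sub>R outer (uu i) (vv j))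
        = (\<Sum>i\<in>UNIV. \<Sum>j\<in>UNIV. (\<Sum>K\<in>UNIV. eps i K * eps j K) *\<^sub>R outer (uu i) (vv j))"
      by (subst sum.swap) (simp add: sum.swap[of _ "UNIV::'n set set"] scaleR_sum_left)
    also have "\<dots> = (\<Sum>i\<in>UNIV. D *\<^sub>R outer (uu i) (vv i))"
    proof (intro sum.cong refl)
      fix i
      have "(\<Sum>j\<in>UNIV. (\<Sum>K\<in>UNIV. eps i K * eps j K) *\<^sub>R outer (uu i) (vv j))
          = (\<Sum>j\<in>UNIV. if j = i then real D *\<^sub>R outer (uu i) (vv j) else 0)"
        by (intro sum.cong refl) (auto simp: rademacher D_def)
      thus "(\<Sum>j\<in>UNIV. (\<Sum>K\<in>UNIV. eps i K * eps j K) *\<^sub>R outer (uu i) (vv j)) = real D *\<^sub>R outer (uu i) (vv i)"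
        by simp
    qed
    finally show ?thesis using D0 by (simp add: scaleR_sum_right ouv dec[symmetric])
  qed
  have nU: "(norm (U K))^2 = nuclear_norm X / D" for K
  proof -
    have "(norm (\<Sum>j\<in>UNIV. eps j K *\<^sub>R uu j))^2 = (\<Sum>j\<in>UNIV. (norm (eps j K *\<^sub>R uu j))^2)"
      by (rule norm_sum_Pythagorean) (auto simp: pairwise_def orthogonal_def ouu)
    also have "\<dots> = (\<Sum>j\<in>UNIV. s j)" by (intro sum.cong refl) (simp add: nuu abs_eps power_mult_distrib)
    finally show ?thesis using D0 by (simp add: U_def nn s_def power_mult_distrib power_divide)
  qed
  have nV: "(norm (V K))^2 = nuclear_norm X / D" for K
  proof -
    have "(norm (\<Sum>j\<in>UNIV. eps j K *\<^sub>R vv j))^2 = (\<Sum>j\<in>UNIV. (norm (eps j K *\<^sub>R vv j))^2)"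
      by (rule norm_sum_Pythagorean) (auto simp: pairwise_def orthogonal_def ovv)
    also have "\<dots> = (\<Sum>j\<in>UNIV. s j)" by (intro sum.cong refl) (simp add: nvv abs_eps power_mult_distrib)
    finally show ?thesis using D0 by (simp add: V_def nn s_def power_mult_distrib power_divide)
  qed
  obtain g where g: "bij_betw g {0..<D} (UNIV::'n set set)"
    using ex_bij_betw_nat_finite[of "UNIV::'n set set"] by (auto simp: D_def)
  have re1: "(\<Sum>k<D. outer (U (g k)) (V (g k))) = (\<Sum>K\<in>UNIV. outer (U K) (V K))"
    unfolding lessThan_atLeast0 by (rule sum.reindex_bij_betw[OF g])
  have fp: "factor_prod D (\<lambda>k. U (g k)) (\<lambda>k. V (g k)) = X"
    unfolding factor_prod_outer re1 sumUV ..
  have re2: "(\<Sum>k<D. (norm (U (g k)))^2 * (norm (V (g k)))^2) = (\<Sum>K\<in>UNIV. (norm (U K))^2 * (norm (V K))^2)"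
    unfolding lessThan_atLeast0 by (rule sum.reindex_bij_betw[OF g])
  have om: "omega_dropout D (\<lambda>k. U (g k)) (\<lambda>k. V (g k)) = (\<Sum>K\<in>UNIV. (norm (U K))^2 * (norm (V K))^2)"
    unfolding omega_dropout_def re2 ..
  have "(\<Sum>K\<in>(UNIV::'n set set). (norm (U K))^2 * (norm (V K))^2) = real D * ((nuclear_norm X / D) * (nuclear_norm X / D))"
    by (simp add: nU nV D_def)
  hence om2: "real D * omega_dropout D (\<lambda>k. U (g k)) (\<lambda>k. V (g k)) = (nuclear_norm X)^2"
    unfolding om using D0 by (simp add: power2_eq_square)
  have rk: "rank X \<le> D"
  proof -
    have "rank X \<le> CARD('n)" using rank_bound[of X] by simp
    also have "CARD('n) \<le> D"
    proof -
      have "D = card (Pow (UNIV::'n set))" unfolding D_def Pow_UNIV ..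
      also have "\<dots> = 2 ^ CARD('n)" by (rule card_Pow) simp
      finally show ?thesis by (simp add: less_exp less_imp_le)
    qed
    finally show ?thesis .
  qed
  have D1: "D \<ge> 1" using D0 by simp
  show ?thesis using D1 rk fp om2 by blast
qed


theorem proposition2:
  fixes p :: real
  assumes "0 < p" and "p < 1"
  shows "lower_convex_envelope (Lambda p :: real^'n^'m \<Rightarrow> real)
           = (\<lambda>X. (1 - p) / p * (nuclear_norm X)\<^sup>2)"
proof -
  have p: "0 < p" "p < 1" by fact+
  have LamEq: "Lambda p X = (1 - p) / p * (nuclear_norm X)\<^sup>2" for X :: "real^'n^'m"
  proof -
    define S where "S = { (1 - theta p d) / theta p d * omega_dropout d u v
      | d u v. d \<ge> 1 \<and> d \<ge> rank X \<and> factor_prod d u v = X }"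
    obtain d u v where d: "d \<ge> 1" "d \<ge> rank X" "factor_prod d u v = X"
      and om: "real d * omega_dropout d u v = (nuclear_norm X)^2"
      using lambda_attained[of X] by blast
    have "(1 - theta p d) / theta p d * omega_dropout d u v = (1 - p) / p * (nuclear_norm X)\<^sup>2"
      using theta_ratio[OF p d(1)] om by (simp add: field_simps)
    hence mem: "(1 - p) / p * (nuclear_norm X)\<^sup>2 \<in> S"
      unfolding S_def using d by force
    have lb: "(1 - p) / p * (nuclear_norm X)\<^sup>2 \<le> x" if "x \<in> S" for x
      using that lambda_elem_lower[OF p] unfolding S_def by auto
    show ?thesis unfolding Lambda_def S_def[symmetric] by (rule cInf_eq_minimum[OF mem lb])
  qed
  have cvx: "convex_on UNIV (\<lambda>X::real^'n^'m. (1 - p) / p * (nuclear_norm X)\<^sup>2)"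
    using p by (intro sq_nuclear_convex) simp
  show ?thesis
  proof
    fix X :: "real^'n^'m"
    let ?G = "{g. convex_on UNIV g \<and> (\<forall>y. g y \<le> (Lambda p :: real^'n^'m \<Rightarrow> real) y)}"
    have fG: "(\<lambda>X::real^'n^'m. (1 - p) / p * (nuclear_norm X)\<^sup>2) \<in> ?G"
      using cvx LamEq by simp
    show "lower_convex_envelope (Lambda p :: real^'n^'m \<Rightarrow> real) X = (1 - p) / p * (nuclear_norm X)\<^sup>2"
      unfolding lower_convex_envelope_def
    proof (rule cSup_eq_maximum)
      show "(1 - p) / p * (nuclear_norm X)\<^sup>2 \<in> (\<lambda>g. g X) ` ?G"
        using fG by (rule rev_image_eqI) simp
      fix z assume "z \<in> (\<lambda>g. g X) ` ?G"
      then obtain g where "g \<in> ?G" "z = g X" by blast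
      thus "z \<le> (1 - p) / p * (nuclear_norm X)\<^sup>2" using LamEq by auto
    qed
  qed
qed

end
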